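(* There exist bounding sequences $(n_k^-)_{k\in\omega},(n_k^+)_{k\in\omega}$ and a modified suitable family $\mathcal{F}=\{(a_\alpha,d_\alpha,b_\alpha,g_\alpha,c_\alpha,h_\alpha,e_\alpha,u_\alpha):\alpha\in2^\omega\}$ with respect to them, indexed by $2^\omega$ (so of size continuum, with distinct indices giving distinct tuples).
   Context: Slalom notation: for $c,h\in\omega^\omega$, $c^{\triangledown h}(n)=|[c(n)]^{\le h(n)}|$ (number of subsets of $\{0,\dots,c(n)-1\}$ of size $\le h(n)$). Auxiliary functions: $g_{c,h}(k)=\lfloor\log_2c(n)\rfloor$ for $k\in J_n$, where $\langle J_n\rangle$ is the partition of $\omega$ into consecutive intervals with $|J_n|=h(n)$; $f_{b,g}(k)=\sum_{l\le n}\lceil\log_2b(l)\rceil$ for $k\in I_n$, where $\langle I_n\rangle$ is the consecutive interval partition with $|I_n|=g(n)$; for increasing $f$, $e_f(k)=\min\{n:k<f(2^n)\}$. Bounding sequences: $(n_k^-),(n_k^+)$ natural numbers $\ge2$ with $n_k^-n_k^+<n_{k+1}^-$ for all $k$ and $\lim_k\log_{n_k^-}n_k^+=\infty$. Modified suitable family w.r.t. them: a family of tuples of functions in $\omega^\omega$ ($a,d,b,g,c,h,u$ increasing, $e$ nondecreasing) such that for all $\alpha\in A$: (S1) for all $k$, each of $a_\alpha(k),d_\alpha(k),b_\alpha(k),g_\alpha(k),b_\alpha^{\triangledown g_\alpha}(k),b_\alpha(k)/g_\alpha(k),h_\alpha(k),c_\alpha^{\triangledown h_\alpha}(k)$ lies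 in $[n_k^-,n_k^+]$; (S2) $h_\alpha<c_\alpha$ pointwise and $\limsup_k\frac{1}{d_\alpha(k)}\log_{d_\alpha(k)}(h_\alpha(k)+1)=\infty$; (S3) $b_\alpha/g_\alpha\ge d_\alpha$ pointwise; (S4) $a_\alpha\ge b_\alpha^{\triangledown g_\alpha}$ pointwise; (S7) for all $\beta\in A$, $\beta\ne\alpha$: $\lim_k\min\{c_\beta^{\triangledown h_\beta}(k)/d_\alpha(k),\ a_\alpha(k)/d_\beta(k)\}=0$; (MS1) $e_\alpha=e_{u_\alpha}$; (MS2) $e_\alpha(g_{c_\alpha,h_\alpha}(k))\ge2\log_2k$ for all $k\ge1$; (MS3) $f_{b_\alpha,g_\alpha}\le u_\alpha$ pointwise. *)

theory Defs
  imports Complex_Main "HOL-Library.Extended_Real"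
begin

definition slalom_count :: "(nat \<Rightarrow> nat) \<Rightarrow> (nat \<Rightarrow> nat) \<Rightarrow> nat \<Rightarrow> nat" where
  "slalom_count c h n = card {A. A \<subseteq> {..<c n} \<and> card A \<le> h n}"

text \<open>Index n of the interval containing k, for the partition of the naturals into
  consecutive intervals J_0, J_1, ... with |J_n| = h n, i.e.
  J_n = [sum_{i<n} h i, sum_{i<=n} h i).\<close>
definition interval_index :: "(nat \<Rightarrow> nat) \<Rightarrow> nat \<Rightarrow> nat" where
  "interval_index h k = (LEAST n. k < (\<Sum>i\<le>n. h i))"

definition g_fun :: "(nat \<Rightarrow> nat) \<Rightarrow> (nat \<Rightarrow> nat) \<Rightarrow> nat \<Rightarrow> nat" where
  "g_fun c h k = nat \<lfloor>log 2 (real (c (interval_index h k)))\<rfloor>"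

definition f_fun :: "(nat \<Rightarrow> nat) \<Rightarrow> (nat \<Rightarrow> nat) \<Rightarrow> nat \<Rightarrow> nat" where
  "f_fun b g k = (\<Sum>l\<le>interval_index g k. nat \<lceil>log 2 (real (b l))\<rceil>)"

definition e_fun :: "(nat \<Rightarrow> nat) \<Rightarrow> nat \<Rightarrow> nat" where
  "e_fun f k = (LEAST n. k < f (2 ^ n))"

definition bounding_sequences :: "(nat \<Rightarrow> nat) \<Rightarrow> (nat \<Rightarrow> nat) \<Rightarrow> bool" where
  "bounding_sequences nm np \<longleftrightarrow>
     (\<forall>k. 2 \<le> nm k \<and> 2 \<le> np k \<and> nm k * np k < nm (Suc k)) \<and>
     filterlim (\<lambda>k. log (real (nm k)) (real (np k))) at_top sequentially"

definition mod_suitable_family ::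
  "(nat \<Rightarrow> nat) \<Rightarrow> (nat \<Rightarrow> nat) \<Rightarrow> 'i set \<Rightarrow>
   ('i \<Rightarrow> nat \<Rightarrow> nat) \<Rightarrow> ('i \<Rightarrow> nat \<Rightarrow> nat) \<Rightarrow> ('i \<Rightarrow> nat \<Rightarrow> nat) \<Rightarrow> ('i \<Rightarrow> nat \<Rightarrow> nat) \<Rightarrow>
   ('i \<Rightarrow> nat \<Rightarrow> nat) \<Rightarrow> ('i \<Rightarrow> nat \<Rightarrow> nat) \<Rightarrow> ('i \<Rightarrow> nat \<Rightarrow> nat) \<Rightarrow> ('i \<Rightarrow> nat \<Rightarrow> nat) \<Rightarrow> bool" where
  "mod_suitable_family nm np A a d b g c h e u \<longleftrightarrow>
    (\<forall>\<alpha>\<in>A.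
       \<comment> \<open>monotonicity\<close>
       strict_mono (a \<alpha>) \<and> strict_mono (d \<alpha>) \<and> strict_mono (b \<alpha>) \<and> strict_mono (g \<alpha>) \<and>
       strict_mono (c \<alpha>) \<and> strict_mono (h \<alpha>) \<and> strict_mono (u \<alpha>) \<and> mono (e \<alpha>) \<and>
       \<comment> \<open>(S1)\<close>
       (\<forall>k. nm k \<le> a \<alpha> k \<and> a \<alpha> k \<le> np k \<and>
            nm k \<le> d \<alpha> k \<and> d \<alpha> k \<le> np k \<and>
            nm k \<le> b \<alpha> k \<and> b \<alpha> k \<le> np k \<and>
            nm k \<le> g \<alpha> k \<and> g \<alpha> k \<le> np k \<and>
            nm k \<le> slalom_count (b \<alpha>) (g \<alpha>) k \<and> slalom_count (b \<alpha>) (g \<alpha>) k \<le> np k \<and>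
            real (nm k) \<le> real (b \<alpha> k) / real (g \<alpha> k) \<and>
            real (b \<alpha> k) / real (g \<alpha> k) \<le> real (np k) \<and>
            nm k \<le> h \<alpha> k \<and> h \<alpha> k \<le> np k \<and>
            nm k \<le> slalom_count (c \<alpha>) (h \<alpha>) k \<and> slalom_count (c \<alpha>) (h \<alpha>) k \<le> np k) \<and>
       \<comment> \<open>(S2)\<close>
       (\<forall>k. h \<alpha> k < c \<alpha> k) \<and>
       limsup (\<lambda>k. ereal (1 / real (d \<alpha> k) * log (real (d \<alpha> k)) (real (h \<alpha> k + 1)))) = \<infinity> \<and>
       \<comment> \<open>(S3)\<close>
       (\<forall>k. real (d \<alpha> k) \<le> real (b \<alpha> k) / real (g \<alpha> k)) \<and>
       \<comment> \<open>(S4)\<close>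
       (\<forall>k. slalom_count (b \<alpha>) (g \<alpha>) k \<le> a \<alpha> k) \<and>
       \<comment> \<open>(S7)\<close>
       (\<forall>\<beta>\<in>A. \<beta> \<noteq> \<alpha> \<longrightarrow>
          (\<lambda>k. min (real (slalom_count (c \<beta>) (h \<beta>) k) / real (d \<alpha> k))
                    (real (a \<alpha> k) / real (d \<beta> k))) \<longlonglongrightarrow> 0) \<and>
       \<comment> \<open>(MS1)\<close>
       e \<alpha> = e_fun (u \<alpha>) \<and>
       \<comment> \<open>(MS2)\<close>
       (\<forall>k\<ge>1. 2 * log 2 (real k) \<le> real (e \<alpha> (g_fun (c \<alpha>) (h \<alpha>) k))) \<and>
       \<comment> \<open>(MS3)\<close>
       (\<forall>k. f_fun (b \<alpha>) (g \<alpha>) k \<le> u \<alpha> k))"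

end

theory Submission
  imports Defs
begin

definition Hf :: "nat \<Rightarrow> nat \<Rightarrow> nat" where "Hf p N = N ^ (N * (p+1))"
definition Gf :: "nat \<Rightarrow> nat \<Rightarrow> nat" where "Gf p N = ((p+1) * Hf p N)^2"
definition Bf :: "nat \<Rightarrow> nat \<Rightarrow> nat" where "Bf p N = N * Gf p N"
definition Af :: "nat \<Rightarrow> nat \<Rightarrow> nat" where "Af p N = 2 ^ Bf p N"
definition Cf :: "nat \<Rightarrow> nat \<Rightarrow> nat" where "Cf p N = 2 ^ ((p+1) * Bf p N + Gf p N)"
definition Uf :: "nat \<Rightarrow> nat \<Rightarrow> nat" where "Uf p N = 2 ^ Cf p N"

primrec Pp :: "nat \<Rightarrow> nat" where
  "Pp 0 = 2"
| "Pp (Suc p) = (p+2) * Pp p * Uf p (Pp p)"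

lemma Uf_pos: "0 < Uf p N" by (simp add: Uf_def)

lemma Pp_ge2: "2 \<le> Pp p"
proof (induction p)
  case 0 then show ?case by simp
next
  case (Suc p)
  have "1 \<le> Uf p (Pp p)" using Uf_pos[of p "Pp p"] by linarith
  then have "2 * 1 * 1 \<le> (p+2) * Pp p * Uf p (Pp p)"
    using Suc by (intro mult_le_mono) auto
  then show ?case by simp
qed

lemma Uf_lt_Pp: "Uf p (Pp p) < Pp (Suc p)"
proof -
  have "1 * Uf p (Pp p) < ((p+2) * Pp p) * Uf p (Pp p)"
    using Pp_ge2[of p] Uf_pos[of p "Pp p"] by (intro mult_strict_right_mono) auto
  then show ?thesis by simp
qed

lemma Uf_ratio: "real (p+2) * real (Uf p (Pp p)) \<le> real (Pp (Suc p))"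
proof -
  have "(p+2) * Uf p (Pp p) * 1 \<le> (p+2) * Uf p (Pp p) * Pp p"
    using Pp_ge2[of p] by (intro mult_le_mono2) simp
  then have "(p+2) * Uf p (Pp p) \<le> (p+2) * Pp p * Uf p (Pp p)"
    by (simp only: mult_1_right ac_simps)
  then have "real ((p+2) * Uf p (Pp p)) \<le> real (Pp (Suc p))" by (simp only: Pp.simps of_nat_le_iff)
  then show ?thesis by (simp only: of_nat_mult)
qed

lemma Pp_smono: "strict_mono Pp"
proof (rule strict_mono_Suc_iff[THEN iffD2], intro allI)
  fix p
  have "Pp p * 1 < Pp p * ((p+2) * Uf p (Pp p))"
    using Pp_ge2[of p] Uf_pos[of p "Pp p"]
    by (intro mult_strict_left_mono) (auto simp: Suc_le_eq)
  then show "Pp p < Pp (Suc p)" by (simp only: Pp.simps mult_1_right ac_simps)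
qed

lemma Pp_mono_le: "p \<le> q \<Longrightarrow> Pp p \<le> Pp q"
  using Pp_smono by (simp add: strict_mono_less_eq)

lemma HfN: "1 \<le> N \<Longrightarrow> N \<le> Hf p N"
  unfolding Hf_def by (rule self_le_power) auto

lemma HfG: "Hf p N \<le> Gf p N"
proof -
  have "Hf p N \<le> (p+1) * Hf p N" by simp
  also have "\<dots> \<le> ((p+1) * Hf p N)^2" by (simp add: power2_eq_square)
  finally show ?thesis by (simp add: Gf_def)
qed

lemma GfB: "1 \<le> N \<Longrightarrow> Gf p N \<le> Bf p N"
  unfolding Bf_def by simp

lemma BfA: "Bf p N < Af p N" unfolding Af_def by (rule less_exp)

lemma AfC: "Af p N \<le> Cf p N"
  unfolding Af_def Cf_def by (rule power_increasing) auto

lemma HfC: "Hf p N < Cf p N"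
proof -
  have "Gf p N < 2 ^ Gf p N" by (rule less_exp)
  also have "\<dots> \<le> Cf p N" unfolding Cf_def by (rule power_increasing) auto
  finally show ?thesis using HfG[of p N] by linarith
qed

lemma CfU: "Cf p N < Uf p N" unfolding Uf_def by (rule less_exp)

lemma slalom_bounds:
  assumes "h n \<le> c n"
  shows "2 ^ h n \<le> slalom_count c h n" "slalom_count c h n \<le> 2 ^ c n"
proof -
  have sub1: "Pow {..<h n} \<subseteq> {A. A \<subseteq> {..<c n} \<and> card A \<le> h n}"
  proof
    fix A assume "A \<in> Pow {..<h n}"
    then have "A \<subseteq> {..<h n}" by auto
    then have "card A \<le> card {..<h n}" by (intro card_mono) auto
    then show "A \<in> {A. A \<subseteq> {..<c n} \<and> card A \<le> h n}"
      using \<open>A \<subseteq> {..<h n}\<close> assms by auto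
  qed
  have sub2: "{A. A \<subseteq> {..<c n} \<and> card A \<le> h n} \<subseteq> Pow {..<c n}" by auto
  have "card (Pow {..<h n}) \<le> card {A. A \<subseteq> {..<c n} \<and> card A \<le> h n}"
    using sub1 sub2 by (intro card_mono) (auto intro: finite_subset)
  then show "2 ^ h n \<le> slalom_count c h n" by (simp add: slalom_count_def card_Pow)
  have "card {A. A \<subseteq> {..<c n} \<and> card A \<le> h n} \<le> card (Pow {..<c n})"
    using sub2 by (intro card_mono) auto
  then show "slalom_count c h n \<le> 2 ^ c n" by (simp add: slalom_count_def card_Pow)
qed

lemma chain:
  assumes "1 \<le> N"
  shows "N \<le> Hf p N" "Hf p N \<le> Gf p N" "Gf p N \<le> Bf p N" "Bf p N < Af p N"
        "Af p N \<le> Cf p N" "Hf p N < Cf p N" "Cf p N < Uf p N"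
  using HfN[OF assms] HfG GfB[OF assms] BfA AfC HfC CfU by auto

lemma Pp_le_Uf: "Pp p \<le> Uf p (Pp p)"
  using chain[of "Pp p" p] Pp_ge2[of p] by linarith

lemma Uf_mono: "p \<le> q \<Longrightarrow> Uf p (Pp p) \<le> Uf q (Pp q)"
proof (cases "p = q")
  case False
  assume "p \<le> q"
  with False have "Suc p \<le> q" by simp
  have "Uf p (Pp p) < Pp (Suc p)" by (rule Uf_lt_Pp)
  also have "\<dots> \<le> Pp q" using Pp_mono_le[OF \<open>Suc p \<le> q\<close>] .
  also have "\<dots> \<le> Uf q (Pp q)" by (rule Pp_le_Uf)
  finally show ?thesis by simp
qed simp

section \<open>encoding of prefixes\<close>

definition enc :: "(nat \<Rightarrow> bool) \<Rightarrow> nat \<Rightarrow> nat" where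
  "enc \<alpha> k = (\<Sum>i<k. if \<alpha> i then 2^i else 0)"

lemma enc_Suc: "enc \<alpha> (Suc k) = enc \<alpha> k + (if \<alpha> k then 2^k else 0)"
  by (simp add: enc_def)

lemma enc_lt: "enc \<alpha> k < 2^k"
proof (induction k)
  case 0 then show ?case by (simp add: enc_def)
next
  case (Suc k) then show ?case by (simp add: enc_Suc)
qed

lemma enc_mod: "j \<le> k \<Longrightarrow> enc \<alpha> k mod 2^j = enc \<alpha> j"
proof (induction k)
  case 0 then show ?case using enc_lt[of \<alpha> 0] by simp
next
  case (Suc k)
  show ?case
  proof (cases "j = Suc k")
    case True then show ?thesis using enc_lt[of \<alpha> "Suc k"] by simp
  next
    case False
    then have "j \<le> k" using Suc.prems by simp
    have dv: "(2::nat)^j dvd (if \<alpha> k then 2^k else 0)"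
      using \<open>j \<le> k\<close> by (simp add: le_imp_power_dvd)
    have "enc \<alpha> (Suc k) mod 2^j = enc \<alpha> k mod 2^j"
      unfolding enc_Suc using dv by (metis mod_add_right_eq add.right_neutral dvd_imp_mod_0)
    then show ?thesis using Suc.IH[OF \<open>j \<le> k\<close>] by simp
  qed
qed

lemma enc_bit: "enc \<alpha> (Suc i) div 2^i = (if \<alpha> i then 1 else 0)"
  using enc_lt[of \<alpha> i] by (simp add: enc_Suc)

lemma enc_diff:
  assumes "\<alpha> i \<noteq> \<beta> i" "i < k"
  shows "enc \<alpha> k \<noteq> enc \<beta> k"
proof
  assume eq: "enc \<alpha> k = enc \<beta> k"
  have "Suc i \<le> k" using assms by simp
  then have "enc \<alpha> (Suc i) = enc \<beta> (Suc i)"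
    using enc_mod[of "Suc i" k \<alpha>] enc_mod[of "Suc i" k \<beta>] eq by simp
  then have "enc \<alpha> (Suc i) div 2^i = enc \<beta> (Suc i) div 2^i" by simp
  then show False using assms(1) unfolding enc_bit by (auto split: if_splits)
qed

definition pos :: "(nat \<Rightarrow> bool) \<Rightarrow> nat \<Rightarrow> nat" where
  "pos \<alpha> k = 2^k + enc \<alpha> k"

lemma pos_lo: "2^k \<le> pos \<alpha> k" by (simp add: pos_def)
lemma pos_hi: "pos \<alpha> k \<le> 2^(Suc k) - 1" using enc_lt[of \<alpha> k] by (simp add: pos_def)
lemma pos_gt: "k < pos \<alpha> k" using pos_lo[of k \<alpha>] less_exp[of k] by linarith

definition nmf :: "nat \<Rightarrow> nat" where "nmf k = Pp (2^k)"
definition npf :: "nat \<Rightarrow> nat" where "npf k = Uf (2^(Suc k) - 1) (Pp (2^(Suc k) - 1))"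

definition fd :: "(nat \<Rightarrow> bool) \<Rightarrow> nat \<Rightarrow> nat" where "fd \<alpha> k = Pp (pos \<alpha> k)"
definition fh :: "(nat \<Rightarrow> bool) \<Rightarrow> nat \<Rightarrow> nat" where "fh \<alpha> k = Hf (pos \<alpha> k) (Pp (pos \<alpha> k))"
definition fg :: "(nat \<Rightarrow> bool) \<Rightarrow> nat \<Rightarrow> nat" where "fg \<alpha> k = Gf (pos \<alpha> k) (Pp (pos \<alpha> k))"
definition fb :: "(nat \<Rightarrow> bool) \<Rightarrow> nat \<Rightarrow> nat" where "fb \<alpha> k = Bf (pos \<alpha> k) (Pp (pos \<alpha> k))"
definition fa :: "(nat \<Rightarrow> bool) \<Rightarrow> nat \<Rightarrow> nat" where "fa \<alpha> k = Af (pos \<alpha> k) (Pp (pos \<alpha> k))"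
definition fc :: "(nat \<Rightarrow> bool) \<Rightarrow> nat \<Rightarrow> nat" where "fc \<alpha> k = Cf (pos \<alpha> k) (Pp (pos \<alpha> k))"
definition fu :: "(nat \<Rightarrow> bool) \<Rightarrow> nat \<Rightarrow> nat" where "fu \<alpha> k = f_fun (fb \<alpha>) (fg \<alpha>) k + k"
definition fe :: "(nat \<Rightarrow> bool) \<Rightarrow> nat \<Rightarrow> nat" where "fe \<alpha> = e_fun (fu \<alpha>)"

lemma in_level:
  assumes "Pp (pos \<alpha> k) \<le> V" "V \<le> Uf (pos \<alpha> k) (Pp (pos \<alpha> k))"
  shows "nmf k \<le> V \<and> V \<le> npf k"
proof
  show "nmf k \<le> V" using Pp_mono_le[OF pos_lo[of k \<alpha>]] assms(1) unfolding nmf_def by linarith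
  show "V \<le> npf k" using Uf_mono[OF pos_hi[of \<alpha> k]] assms(2) unfolding npf_def by linarith
qed

lemma nm_ge2: "2 \<le> nmf k" by (simp add: nmf_def Pp_ge2)
lemma np_ge2: "2 \<le> npf k" unfolding npf_def using Pp_le_Uf Pp_ge2 order_trans by blast

lemma nm_np_step: "nmf k * npf k < nmf (Suc k)"
proof -
  define q :: nat where "q = 2^(Suc k) - 1"
  have q1: "Suc q = 2^(Suc k)" unfolding q_def by simp
  have "2^k \<le> q" unfolding q_def by simp
  then have "nmf k \<le> Pp q" unfolding nmf_def by (rule Pp_mono_le)
  then have "nmf k * npf k \<le> Pp q * Uf q (Pp q)" unfolding npf_def q_def[symmetric] by simp
  also have "\<dots> < (q+2) * Pp q * Uf q (Pp q)"
    using Pp_ge2[of q] Uf_pos[of q "Pp q"] by simp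
  also have "\<dots> = nmf (Suc k)" unfolding nmf_def q1[symmetric] by simp
  finally show ?thesis .
qed

lemma smono_from_levels:
  assumes "\<And>k. nmf k \<le> f k \<and> f k \<le> npf k"
  shows "strict_mono f"
proof (rule strict_mono_Suc_iff[THEN iffD2], intro allI)
  fix k
  have "f k \<le> npf k" using assms by blast
  also have "\<dots> \<le> nmf k * npf k" using nm_ge2[of k] by simp
  also have "\<dots> < nmf (Suc k)" by (rule nm_np_step)
  also have "\<dots> \<le> f (Suc k)" using assms by blast
  finally show "f k < f (Suc k)" .
qed

lemma pos_chain:
  fixes \<alpha> k
  defines "p \<equiv> pos \<alpha> k"
  shows "Pp p \<le> Hf p (Pp p)" "Hf p (Pp p) \<le> Gf p (Pp p)" "Gf p (Pp p) \<le> Bf p (Pp p)"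
        "Bf p (Pp p) < Af p (Pp p)" "Af p (Pp p) \<le> Cf p (Pp p)" "Hf p (Pp p) < Cf p (Pp p)"
        "Cf p (Pp p) < Uf p (Pp p)"
  using chain[of "Pp p" p] Pp_ge2[of p] by auto

lemma S1_all:
  "nmf k \<le> fa \<alpha> k \<and> fa \<alpha> k \<le> npf k \<and>
   nmf k \<le> fd \<alpha> k \<and> fd \<alpha> k \<le> npf k \<and>
   nmf k \<le> fb \<alpha> k \<and> fb \<alpha> k \<le> npf k \<and>
   nmf k \<le> fg \<alpha> k \<and> fg \<alpha> k \<le> npf k \<and>
   nmf k \<le> slalom_count (fb \<alpha>) (fg \<alpha>) k \<and> slalom_count (fb \<alpha>) (fg \<alpha>) k \<le> npf k \<and>
   real (nmf k) \<le> real (fb \<alpha> k) / real (fg \<alpha> k) \<and>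
   real (fb \<alpha> k) / real (fg \<alpha> k) \<le> real (npf k) \<and>
   nmf k \<le> fh \<alpha> k \<and> fh \<alpha> k \<le> npf k \<and>
   nmf k \<le> slalom_count (fc \<alpha>) (fh \<alpha>) k \<and> slalom_count (fc \<alpha>) (fh \<alpha>) k \<le> npf k"
proof -
  define p where "p = pos \<alpha> k"
  define N where "N = Pp p"
  note ch = pos_chain[of \<alpha> k, folded p_def, folded N_def]
  have U: "Uf p N = Uf (pos \<alpha> k) (Pp (pos \<alpha> k))" "N = Pp (pos \<alpha> k)" by (simp_all add: p_def N_def)
  have lev: "\<And>V. N \<le> V \<Longrightarrow> V \<le> Uf p N \<Longrightarrow> nmf k \<le> V \<and> V \<le> npf k"
    using in_level[of \<alpha> k] U by metis
  have vals: "fa \<alpha> k = Af p N" "fd \<alpha> k = N" "fb \<alpha> k = Bf p N" "fg \<alpha> k = Gf p N"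
     "fh \<alpha> k = Hf p N" "fc \<alpha> k = Cf p N"
    by (simp_all add: fa_def fd_def fb_def fg_def fh_def fc_def p_def N_def)
  have sb: "2 ^ fg \<alpha> k \<le> slalom_count (fb \<alpha>) (fg \<alpha>) k" "slalom_count (fb \<alpha>) (fg \<alpha>) k \<le> 2 ^ fb \<alpha> k"
    using slalom_bounds[of "fg \<alpha>" k "fb \<alpha>"] ch vals by auto
  have sc: "2 ^ fh \<alpha> k \<le> slalom_count (fc \<alpha>) (fh \<alpha>) k" "slalom_count (fc \<alpha>) (fh \<alpha>) k \<le> 2 ^ fc \<alpha> k"
    using slalom_bounds[of "fh \<alpha>" k "fc \<alpha>"] ch vals by auto
  have e1: "Gf p N < 2 ^ Gf p N" "Hf p N < 2 ^ Hf p N" by (simp_all add: less_exp)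
  have e2: "2 ^ Bf p N = Af p N" "2 ^ Cf p N = Uf p N" by (simp_all add: Af_def Uf_def)
  have Gpos: "0 < Gf p N" using ch Pp_ge2[of p] N_def by linarith
  have ratio: "real (fb \<alpha> k) / real (fg \<alpha> k) = real N"
    using Gpos by (simp add: vals Bf_def)
  have "N \<le> Uf p N" using ch by linarith
  then have "nmf k \<le> N \<and> N \<le> npf k" using lev[OF order.refl] by blast
  then have rN: "real (nmf k) \<le> real N \<and> real N \<le> real (npf k)" by simp
  have A: "nmf k \<le> fa \<alpha> k \<and> fa \<alpha> k \<le> npf k" unfolding vals using ch by (intro lev) linarith+
  have D: "nmf k \<le> fd \<alpha> k \<and> fd \<alpha> k \<le> npf k" unfolding vals using ch by (intro lev) linarith+
  have B: "nmf k \<le> fb \<alpha> k \<and> fb \<alpha> k \<le> npf k" unfolding vals using ch by (intro lev) linarith+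
  have G: "nmf k \<le> fg \<alpha> k \<and> fg \<alpha> k \<le> npf k" unfolding vals using ch by (intro lev) linarith+
  have H: "nmf k \<le> fh \<alpha> k \<and> fh \<alpha> k \<le> npf k" unfolding vals using ch by (intro lev) linarith+
  have SB: "nmf k \<le> slalom_count (fb \<alpha>) (fg \<alpha>) k \<and> slalom_count (fb \<alpha>) (fg \<alpha>) k \<le> npf k"
    using sb unfolding vals using ch e1 e2 by (intro lev) linarith+
  have SC: "nmf k \<le> slalom_count (fc \<alpha>) (fh \<alpha>) k \<and> slalom_count (fc \<alpha>) (fh \<alpha>) k \<le> npf k"
    using sc unfolding vals using ch e1 e2 by (intro lev) linarith+
  show ?thesis unfolding ratio using rN A D B G H SB SC by blast
qed

lemma vals_at:
  "fa \<alpha> k = Af (pos \<alpha> k) (fd \<alpha> k)" "fb \<alpha> k = Bf (pos \<alpha> k) (fd \<alpha> k)"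
  "fg \<alpha> k = Gf (pos \<alpha> k) (fd \<alpha> k)" "fh \<alpha> k = Hf (pos \<alpha> k) (fd \<alpha> k)"
  "fc \<alpha> k = Cf (pos \<alpha> k) (fd \<alpha> k)"
  by (simp_all add: fa_def fb_def fg_def fh_def fc_def fd_def)

lemma fd_ge2: "2 \<le> fd \<alpha> k" by (simp add: fd_def Pp_ge2)

lemma ratio_eq: "real (fb \<alpha> k) / real (fg \<alpha> k) = real (fd \<alpha> k)"
proof -
  have "0 < fg \<alpha> k" using chain[of "fd \<alpha> k" "pos \<alpha> k"] fd_ge2[of \<alpha> k] vals_at by simp
  then show ?thesis by (simp add: vals_at Bf_def)
qed

lemma h_lt_c: "fh \<alpha> k < fc \<alpha> k"
  using chain[of "fd \<alpha> k" "pos \<alpha> k"] fd_ge2[of \<alpha> k] by (simp add: vals_at)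

lemma S4: "slalom_count (fb \<alpha>) (fg \<alpha>) k \<le> fa \<alpha> k"
proof -
  have "fg \<alpha> k \<le> fb \<alpha> k" using chain[of "fd \<alpha> k" "pos \<alpha> k"] fd_ge2[of \<alpha> k] by (simp add: vals_at)
  then have "slalom_count (fb \<alpha>) (fg \<alpha>) k \<le> 2 ^ fb \<alpha> k" by (rule slalom_bounds)
  then show ?thesis by (simp add: vals_at Af_def)
qed

lemma upper_a: "fa \<alpha> k \<le> Uf (pos \<alpha> k) (fd \<alpha> k)"
  using chain[of "fd \<alpha> k" "pos \<alpha> k"] fd_ge2[of \<alpha> k] by (simp add: vals_at)

lemma upper_sc: "slalom_count (fc \<alpha>) (fh \<alpha>) k \<le> Uf (pos \<alpha> k) (fd \<alpha> k)"
proof -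
  have "fh \<alpha> k \<le> fc \<alpha> k" using h_lt_c[of \<alpha> k] by simp
  then have "slalom_count (fc \<alpha>) (fh \<alpha>) k \<le> 2 ^ fc \<alpha> k" by (rule slalom_bounds)
  then show ?thesis by (simp add: vals_at Uf_def)
qed

lemma sep:
  assumes "p < q" "k \<le> p"
  shows "real (Uf p (Pp p)) / real (Pp q) \<le> inverse (real (Suc k))"
proof -
  have "real (p+2) * real (Uf p (Pp p)) \<le> real (Pp q)"
    using Uf_ratio[of p] Pp_mono_le[of "Suc p" q] assms by (meson Suc_leI of_nat_le_iff order_trans)
  moreover have "real (Suc k) \<le> real (p+2)" using assms by simp
  ultimately have "real (Suc k) * real (Uf p (Pp p)) \<le> real (Pp q)"
    by (meson mult_right_mono of_nat_0_le_iff order_trans)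
  moreover have "0 < real (Pp q)" using Pp_ge2[of q] by simp
  ultimately show ?thesis by (simp add: field_simps)
qed

lemma S7:
  assumes "\<alpha> \<noteq> \<beta>"
  shows "(\<lambda>k. min (real (slalom_count (fc \<beta>) (fh \<beta>) k) / real (fd \<alpha> k))
                    (real (fa \<alpha> k) / real (fd \<beta> k))) \<longlonglongrightarrow> 0"
proof -
  obtain i where i: "\<alpha> i \<noteq> \<beta> i" using assms by blast
  have ev: "eventually (\<lambda>k. min (real (slalom_count (fc \<beta>) (fh \<beta>) k) / real (fd \<alpha> k))
                    (real (fa \<alpha> k) / real (fd \<beta> k)) \<le> inverse (real (Suc k))) sequentially"
  proof (rule eventually_sequentiallyI[of "Suc i"])
    fix k assume "Suc i \<le> k"
    then have "pos \<alpha> k \<noteq> pos \<beta> k" using enc_diff[of \<alpha> i \<beta> k] i by (simp add: pos_def)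
    then consider "pos \<alpha> k < pos \<beta> k" | "pos \<beta> k < pos \<alpha> k" by linarith
    then show "min (real (slalom_count (fc \<beta>) (fh \<beta>) k) / real (fd \<alpha> k))
                    (real (fa \<alpha> k) / real (fd \<beta> k)) \<le> inverse (real (Suc k))"
    proof cases
      case 1
      have "real (fa \<alpha> k) / real (fd \<beta> k) \<le> real (Uf (pos \<alpha> k) (Pp (pos \<alpha> k))) / real (Pp (pos \<beta> k))"
        unfolding fd_def using upper_a[of \<alpha> k, unfolded fd_def] by (intro divide_right_mono) auto
      also have "\<dots> \<le> inverse (real (Suc k))" using 1 pos_gt[of k \<alpha>] by (intro sep) auto
      finally show ?thesis by linarith
    next
      case 2
      have "real (slalom_count (fc \<beta>) (fh \<beta>) k) / real (fd \<alpha> k) \<le> real (Uf (pos \<beta> k) (Pp (pos \<beta> k))) / real (Pp (pos \<alpha> k))"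
        unfolding fd_def using upper_sc[of \<beta> k, unfolded fd_def] by (intro divide_right_mono) auto
      also have "\<dots> \<le> inverse (real (Suc k))" using 2 pos_gt[of k \<beta>] by (intro sep) auto
      finally show ?thesis by linarith
    qed
  qed
  have ev0: "eventually (\<lambda>k. 0 \<le> min (real (slalom_count (fc \<beta>) (fh \<beta>) k) / real (fd \<alpha> k))
                    (real (fa \<alpha> k) / real (fd \<beta> k))) sequentially" by simp
  show ?thesis by (rule tendsto_sandwich[OF ev0 ev tendsto_const LIMSEQ_inverse_real_of_nat])
qed

lemma S2:
  "limsup (\<lambda>k. ereal (1 / real (fd \<alpha> k) * log (real (fd \<alpha> k)) (real (fh \<alpha> k + 1)))) = \<infinity>"
proof -
  define x where "x k = 1 / real (fd \<alpha> k) * log (real (fd \<alpha> k)) (real (fh \<alpha> k + 1))" for k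
  have lb: "real k \<le> x k" for k
  proof -
    define N where "N = fd \<alpha> k"
    define p where "p = pos \<alpha> k"
    have N2: "2 \<le> N" using fd_ge2 N_def by simp
    have "log (real N) (real (fh \<alpha> k)) = real (N * (p+1))"
      using N2 by (simp add: vals_at Hf_def N_def[symmetric] p_def[symmetric] log_pow_cancel)
    moreover have "log (real N) (real (fh \<alpha> k)) \<le> log (real N) (real (fh \<alpha> k + 1))"
      using N2 chain[of N p] by (subst log_le_cancel_iff) (auto simp: vals_at N_def p_def)
    ultimately have "real N * real (p+1) \<le> log (real N) (real (fh \<alpha> k + 1))"
      by (simp add: algebra_simps)
    then have "real (p+1) \<le> x k" using N2 unfolding x_def N_def[symmetric]
      by (simp add: field_simps)
    moreover have "k \<le> p" using pos_gt[of k \<alpha>] p_def by simp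
    ultimately show ?thesis by simp
  qed
  have "filterlim x at_top sequentially"
    by (rule filterlim_at_top_mono[OF filterlim_real_sequentially]) (simp add: lb)
  then have "(\<lambda>k. ereal (x k)) \<longlonglongrightarrow> \<infinity>" by (simp add: tendsto_PInfty_eq_at_top)
  then have "liminf (\<lambda>k. ereal (x k)) = \<infinity>" by (simp add: liminf_PInfty)
  moreover have "liminf (\<lambda>k. ereal (x k)) \<le> limsup (\<lambda>k. ereal (x k))"
    by (rule Liminf_le_Limsup) simp
  ultimately show ?thesis unfolding x_def by simp
qed

lemma bounding: "bounding_sequences nmf npf"
  unfolding bounding_sequences_def
proof (intro conjI allI)
  fix k
  show "2 \<le> nmf k" "2 \<le> npf k" "nmf k * npf k < nmf (Suc k)" by (rule nm_ge2 np_ge2 nm_np_step)+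
next
  have lb: "real k \<le> log (real (nmf k)) (real (npf k))" for k
  proof -
    define q :: nat where "q = 2^(Suc k) - 1"
    have kq: "k \<le> q" using less_exp[of "Suc k"] unfolding q_def by simp
    have "2^k \<le> q" unfolding q_def by simp
    then have m: "nmf k \<le> Pp q" unfolding nmf_def by (rule Pp_mono_le)
    have "nmf k ^ k \<le> Pp q ^ k" using m by (rule power_mono) simp
    also have "\<dots> \<le> Pp q ^ (Pp q * (q+1))"
    proof (rule power_increasing)
      have "q * 1 \<le> q * Pp q" using Pp_ge2[of q] by (intro mult_le_mono2) simp
      moreover have "Pp q * (q+1) = Pp q + q * Pp q" by (simp add: algebra_simps)
      ultimately show "k \<le> Pp q * (q+1)" using kq by linarith
    qed (use Pp_ge2[of q] in simp)
    also have "\<dots> \<le> npf k"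
      using chain[of "Pp q" q] Pp_ge2[of q] unfolding npf_def q_def[symmetric] Hf_def by linarith
    finally have le: "nmf k ^ k \<le> npf k" .
    have n2: "2 \<le> nmf k" by (rule nm_ge2)
    have "real k = log (real (nmf k)) (real (nmf k) ^ k)" using n2 by (simp add: log_pow_cancel)
    also have "\<dots> \<le> log (real (nmf k)) (real (npf k))"
      using n2 le np_ge2[of k] by (subst log_le_cancel_iff) (auto simp flip: of_nat_power)
    finally show ?thesis .
  qed
  show "filterlim (\<lambda>k. log (real (nmf k)) (real (npf k))) at_top sequentially"
    by (rule filterlim_at_top_mono[OF filterlim_real_sequentially]) (simp add: lb)
qed

section \<open>interval index, u and e\<close>

lemma sum_ge_card: "(\<forall>i. 1 \<le> (h i :: nat)) \<Longrightarrow> k < (\<Sum>i\<le>k. h i)"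
proof -
  assume a: "\<forall>i. 1 \<le> h i"
  have "(\<Sum>i\<le>k. (1::nat)) \<le> (\<Sum>i\<le>k. h i)" using a by (intro sum_mono) auto
  then show ?thesis by simp
qed

lemma idx_spec: "(\<forall>i. 1 \<le> h i) \<Longrightarrow> k < (\<Sum>i\<le>interval_index h k. h i)"
  unfolding interval_index_def by (rule LeastI[of _ k]) (rule sum_ge_card)

lemma idx_le: "k < (\<Sum>i\<le>n. h i) \<Longrightarrow> interval_index h k \<le> n"
  unfolding interval_index_def by (rule Least_le)

lemma idx_mono: "(\<forall>i. 1 \<le> h i) \<Longrightarrow> k \<le> k' \<Longrightarrow> interval_index h k \<le> interval_index h k'"
  using idx_spec[of h k'] by (intro idx_le) auto

lemma fg_ge1: "\<forall>i. 1 \<le> fg \<alpha> i"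
  using S1_all nm_ge2 by (meson le_trans one_le_numeral)

lemma fh_ge1: "\<forall>i. 1 \<le> fh \<alpha> i"
  using S1_all nm_ge2 by (meson le_trans one_le_numeral)

lemma f_fun_mono: "(\<forall>i. 1 \<le> g i) \<Longrightarrow> k \<le> k' \<Longrightarrow> f_fun b g k \<le> f_fun b g k'"
  unfolding f_fun_def using idx_mono[of g k k'] by (intro sum_mono2) auto

lemma fu_smono: "strict_mono (fu \<alpha>)"
proof (rule strict_monoI)
  fix x y :: nat assume "x < y"
  then have "f_fun (fb \<alpha>) (fg \<alpha>) x \<le> f_fun (fb \<alpha>) (fg \<alpha>) y" using fg_ge1 f_fun_mono by (metis less_imp_le)
  with \<open>x < y\<close> show "fu \<alpha> x < fu \<alpha> y" by (simp add: fu_def)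
qed

lemma fu_ge: "x \<le> fu \<alpha> x" by (simp add: fu_def)

lemma e_ex: "m < fu \<alpha> (2 ^ m)"
  using less_exp[of m] fu_ge[of "2^m" \<alpha>] by linarith

lemma e_spec: "m < fu \<alpha> (2 ^ e_fun (fu \<alpha>) m)"
  unfolding e_fun_def by (rule LeastI[of _ m]) (rule e_ex)

lemma fe_mono: "mono (fe \<alpha>)"
proof (rule monoI)
  fix x y :: nat assume "x \<le> y"
  then have "x < fu \<alpha> (2 ^ e_fun (fu \<alpha>) y)" using e_spec[of y \<alpha>] by linarith
  then show "fe \<alpha> x \<le> fe \<alpha> y" unfolding fe_def e_fun_def[of _ x] by (rule Least_le)
qed

lemma nat_ceil_log_le: "1 \<le> b \<Longrightarrow> nat \<lceil>log 2 (real b)\<rceil> \<le> b"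
proof -
  assume b: "1 \<le> b"
  have "real b < 2 ^ b" using less_exp[of b] by (metis of_nat_less_iff of_nat_numeral of_nat_power)
  then have "log 2 (real b) < log 2 (2 ^ b)" using b by (subst log_less_cancel_iff) auto
  then have "log 2 (real b) < real b" by (simp add: log_pow_cancel)
  then have "log 2 (real b) \<le> real b" by linarith
  then show ?thesis by simp
qed

lemma sum_le_last: "strict_mono f \<Longrightarrow> (\<Sum>i\<le>n. f i) \<le> (n+1) * (f n :: nat)"
proof -
  assume sm: "strict_mono f"
  have "(\<Sum>i\<le>n. f i) \<le> (\<Sum>i\<le>n. f n)" using sm by (intro sum_mono) (simp add: strict_mono_less_eq)
  then show ?thesis by simp
qed

lemma MS3: "f_fun (fb \<alpha>) (fg \<alpha>) k \<le> fu \<alpha> k" by (simp add: fu_def)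

lemma smono_fields:
  "strict_mono (fa \<alpha>)" "strict_mono (fd \<alpha>)" "strict_mono (fb \<alpha>)" "strict_mono (fg \<alpha>)"
  "strict_mono (fh \<alpha>)"
  using S1_all[of _ \<alpha>] by (auto intro!: smono_from_levels)

lemma smono_fc: "strict_mono (fc \<alpha>)"
proof (rule smono_from_levels)
  fix k
  have "fc \<alpha> k \<le> Uf (pos \<alpha> k) (Pp (pos \<alpha> k))" "Pp (pos \<alpha> k) \<le> fc \<alpha> k"
    using pos_chain[of \<alpha> k] by (simp_all add: fc_def)
  then show "nmf k \<le> fc \<alpha> k \<and> fc \<alpha> k \<le> npf k" by (rule in_level[rotated])
qed

lemma MS2:
  assumes k1: "1 \<le> k"
  shows "2 * log 2 (real k) \<le> real (fe \<alpha> (g_fun (fc \<alpha>) (fh \<alpha>) k))"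
proof -
  define n where "n = interval_index (fh \<alpha>) k"
  define p where "p = pos \<alpha> n"
  define N where "N = Pp p"
  define E where "E = (p+1) * Bf p N + Gf p N"
  have vh: "fh \<alpha> n = Hf p N" and vg: "fg \<alpha> n = Gf p N" and vb: "fb \<alpha> n = Bf p N"
    and vc: "fc \<alpha> n = Cf p N"
    by (simp_all add: fh_def fg_def fb_def fc_def p_def N_def)
  have np: "n \<le> p" using pos_gt[of n \<alpha>] p_def by simp
  have "k < (\<Sum>i\<le>n. fh \<alpha> i)" unfolding n_def by (rule idx_spec[OF fh_ge1])
  also have "\<dots> \<le> (n+1) * fh \<alpha> n" by (rule sum_le_last[OF smono_fields(5)])
  also have "\<dots> \<le> (p+1) * Hf p N" using np vh by simp
  finally have kH: "k < (p+1) * Hf p N" .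
  have "k^2 < ((p+1) * Hf p N)^2" using kH by (intro power_strict_mono) auto
  also have "\<dots> = fg \<alpha> n" by (simp add: vg Gf_def)
  also have "\<dots> \<le> (\<Sum>i\<le>n. fg \<alpha> i)" by (rule member_le_sum) auto
  finally have idxg: "interval_index (fg \<alpha>) (k^2) \<le> n" by (rule idx_le)
  have k2G: "k^2 \<le> Gf p N" using \<open>k^2 < ((p+1) * Hf p N)^2\<close> unfolding Gf_def by (rule less_imp_le)
  have b1: "\<forall>l. 1 \<le> fb \<alpha> l" using S1_all nm_ge2 by (meson le_trans one_le_numeral)
  have "f_fun (fb \<alpha>) (fg \<alpha>) (k^2) = (\<Sum>l\<le>interval_index (fg \<alpha>) (k^2). nat \<lceil>log 2 (real (fb \<alpha> l))\<rceil>)"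
    by (simp add: f_fun_def)
  also have "\<dots> \<le> (\<Sum>l\<le>n. nat \<lceil>log 2 (real (fb \<alpha> l))\<rceil>)"
    using idxg by (intro sum_mono2) auto
  also have "\<dots> \<le> (\<Sum>l\<le>n. fb \<alpha> l)" using b1 by (intro sum_mono nat_ceil_log_le) auto
  also have "\<dots> \<le> (n+1) * fb \<alpha> n" by (rule sum_le_last[OF smono_fields(3)])
  also have "\<dots> \<le> (p+1) * Bf p N" using np vb by simp
  finally have "f_fun (fb \<alpha>) (fg \<alpha>) (k^2) \<le> (p+1) * Bf p N" .
  then have fuE: "fu \<alpha> (k^2) \<le> E" using k2G by (simp add: fu_def E_def)
  have gE: "g_fun (fc \<alpha>) (fh \<alpha>) k = E"
  proof -
    have "real (fc \<alpha> n) = 2 ^ E" by (simp add: vc Cf_def E_def)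
    then have "log 2 (real (fc \<alpha> n)) = real E" by (simp add: log_pow_cancel)
    then show ?thesis by (simp add: g_fun_def n_def[symmetric])
  qed
  define n0 where "n0 = fe \<alpha> E"
  have "E < fu \<alpha> (2 ^ n0)" unfolding n0_def fe_def by (rule e_spec)
  with fuE have "fu \<alpha> (k^2) < fu \<alpha> (2^n0)" by linarith
  then have lt: "k^2 < 2^n0" using fu_smono strict_mono_less by blast
  have "2 * log 2 (real k) = log 2 (real k ^ 2)" using k1 by (simp add: log_nat_power)
  also have "\<dots> < log 2 (2 ^ n0)"
    using lt k1 by (subst log_less_cancel_iff) (auto simp flip: of_nat_power)
  also have "\<dots> = real n0" by (simp add: log_pow_cancel)
  finally show ?thesis unfolding gE n0_def by simp
qed

lemma inj_fd: "inj fd"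
proof (rule injI)
  fix \<alpha> \<beta> assume eq: "fd \<alpha> = fd \<beta>"
  show "\<alpha> = \<beta>"
  proof (rule ccontr)
    assume "\<alpha> \<noteq> \<beta>"
    then obtain i where i: "\<alpha> i \<noteq> \<beta> i" by blast
    have "Pp (pos \<alpha> (Suc i)) = Pp (pos \<beta> (Suc i))" using eq unfolding fd_def by metis
    then have "pos \<alpha> (Suc i) = pos \<beta> (Suc i)" using Pp_smono strict_mono_eq by metis
    then have "enc \<alpha> (Suc i) = enc \<beta> (Suc i)" by (simp add: pos_def)
    with enc_diff[of \<alpha> i \<beta> "Suc i"] i show False by simp
  qed
qed

theorem proposition6p7:
  shows "\<exists>(nm :: nat \<Rightarrow> nat) (np :: nat \<Rightarrow> nat)
            (a :: (nat \<Rightarrow> bool) \<Rightarrow> nat \<Rightarrow> nat) d b g c h e u.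
           bounding_sequences nm np \<and>
           mod_suitable_family nm np (UNIV :: (nat \<Rightarrow> bool) set) a d b g c h e u \<and>
           inj (\<lambda>\<alpha>. (a \<alpha>, d \<alpha>, b \<alpha>, g \<alpha>, c \<alpha>, h \<alpha>, e \<alpha>, u \<alpha>))"
proof (intro exI conjI)
  show "bounding_sequences nmf npf" by (rule bounding)
  show "mod_suitable_family nmf npf UNIV fa fd fb fg fc fh fe fu"
    unfolding mod_suitable_family_def
    using smono_fields smono_fc fu_smono fe_mono S1_all h_lt_c S2 ratio_eq S4 S7 MS2 MS3
    by (simp add: fe_def)
  show "inj (\<lambda>\<alpha>. (fa \<alpha>, fd \<alpha>, fb \<alpha>, fg \<alpha>, fc \<alpha>, fh \<alpha>, fe \<alpha>, fu \<alpha>))"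
    using inj_fd by (auto simp: inj_def)
qed

end
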